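(* Let $\Lambda$ be diagonal with entries in $[0,1]$ and let $W^{(1)},W^{(2)}\ge 0$ entrywise with $W^{(1)}+W^{(2)}$ row-stochastic. Let $\bar A_d:=\begin{pmatrix}0 & I\\ \Lambda W^{(2)} & \Lambda W^{(1)}\end{pmatrix}$ and $\bar A:=\Lambda(W^{(1)}+W^{(2)})$. Then $\rho(\bar A_d)\ge\rho(\bar A)$.
   Context: $\rho$ denotes spectral radius. $\rho(\bar A_d)$ governs the convergence rate of the FJ-MM system $x(t+1)=\Lambda(W^{(1)}x(t)+W^{(2)}x(t-1))+(I-\Lambda)s$ and $\rho(\bar A)$ that of the comparison FJ system $x(t+1)=\bar A x(t)+(I-\Lambda)s$. *)

theory Defs
  imports "Jordan_Normal_Form.Spectral_Radius"
begin

definition rho_real :: "real mat \<Rightarrow> real" where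
  "rho_real A = spectral_radius (map_mat complex_of_real A)"

definition FJMM_mat :: "nat \<Rightarrow> real mat \<Rightarrow> real mat \<Rightarrow> real mat \<Rightarrow> real mat" where
  "FJMM_mat n Lam W1 W2 =
     four_block_mat (0\<^sub>m n n) (1\<^sub>m n) (Lam * W2) (Lam * W1)"

definition FJ_mat :: "real mat \<Rightarrow> real mat \<Rightarrow> real mat \<Rightarrow> real mat" where
  "FJ_mat Lam W1 W2 = Lam * (W1 + W2)"

end

theory Submission
  imports Defs
begin

lemma mv_sum:
  fixes M :: "'a::comm_semiring_0 mat"
  assumes "M \<in> carrier_mat m m" "u \<in> carrier_vec m" "i < m"
  shows "(M *\<^sub>v u) $ i = (\<Sum>j<m. M $$ (i,j) * u $ j)"
  using assms by (auto simp: scalar_prod_def lessThan_atLeast0 intro!: sum.cong)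

lemma pow_comm:
  fixes M :: "'a::semiring_1 mat"
  assumes M: "M \<in> carrier_mat m m"
  shows "M ^\<^sub>m Suc k = M * M ^\<^sub>m k"
proof (induct k)
  case 0 then show ?case using M by simp
next
  case (Suc k)
  have "M ^\<^sub>m Suc (Suc k) = (M * M ^\<^sub>m k) * M" using Suc by simp
  also have "\<dots> = M * (M ^\<^sub>m k * M)" using M by (simp add: assoc_mult_mat[of _ m m _ m _ m])
  finally show ?case by simp
qed

lemma map_pow:
  assumes M: "(M::real mat) \<in> carrier_mat m m"
  shows "map_mat complex_of_real (M ^\<^sub>m k) = (map_mat complex_of_real M) ^\<^sub>m k"
  using of_real_hom.mat_hom_pow[OF M] .

lemma diag_mult_entry:
  fixes Lam W :: "real mat"
  assumes Lam: "Lam \<in> carrier_mat n n" and W: "W \<in> carrier_mat n n"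
    and d: "diagonal_mat Lam" and i: "i < n" and j: "j < n"
  shows "(Lam * W) $$ (i,j) = Lam $$ (i,i) * W $$ (i,j)"
proof -
  have "(Lam * W) $$ (i,j) = (\<Sum>k<n. Lam $$ (i,k) * W $$ (k,j))"
    using Lam W i j by (auto simp: scalar_prod_def lessThan_atLeast0 intro!: sum.cong)
  also have "\<dots> = (\<Sum>k<n. if k = i then Lam $$ (i,i) * W $$ (i,j) else 0)"
    using d Lam i unfolding diagonal_mat_def by (intro sum.cong) auto
  also have "\<dots> = Lam $$ (i,i) * W $$ (i,j)" using i by simp
  finally show ?thesis .
qed

lemma mv_nonneg:
  fixes M :: "real mat"
  assumes "M \<in> carrier_mat m m" "u \<in> carrier_vec m" "i < m"
    "\<forall>i<m. \<forall>j<m. 0 \<le> M $$ (i,j)" "\<forall>i<m. 0 \<le> u $ i"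
  shows "0 \<le> (M *\<^sub>v u) $ i"
  unfolding mv_sum[OF assms(1-3)] using assms(3-5) by (intro sum_nonneg) auto

lemma pow_lower:
  fixes M :: "real mat"
  assumes M: "M \<in> carrier_mat m m" and z: "z \<in> carrier_vec m"
    and Mn: "\<forall>i<m. \<forall>j<m. 0 \<le> M $$ (i,j)" and zn: "\<forall>i<m. 0 \<le> z $ i"
    and sub: "\<forall>i<m. q * z $ i \<le> (M *\<^sub>v z) $ i" and q: "0 \<le> q"
  shows "\<forall>i<m. q ^ k * z $ i \<le> (M ^\<^sub>m k *\<^sub>v z) $ i"
proof (induct k)
  case 0 then show ?case using M z by simp
next
  case (Suc k)
  show ?case
  proof (intro allI impI)
    fix i assume i: "i < m"
    let ?u = "M ^\<^sub>m k *\<^sub>v z"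
    have u: "?u \<in> carrier_vec m" by (rule mult_mat_vec_carrier[OF pow_carrier_mat[OF M] z])
    have "M ^\<^sub>m Suc k *\<^sub>v z = M *\<^sub>v ?u"
      unfolding pow_comm[OF M] by (rule assoc_mult_mat_vec[OF M pow_carrier_mat[OF M] z])
    hence "(M ^\<^sub>m Suc k *\<^sub>v z) $ i = (M *\<^sub>v ?u) $ i" by simp
    also have "\<dots> = (\<Sum>j<m. M $$ (i,j) * ?u $ j)" using mv_sum[OF M u i] .
    also have "\<dots> \<ge> (\<Sum>j<m. M $$ (i,j) * (q ^ k * z $ j))"
      using Suc Mn i by (intro sum_mono mult_left_mono) auto
    finally have 1: "(\<Sum>j<m. M $$ (i,j) * (q ^ k * z $ j)) \<le> (M ^\<^sub>m Suc k *\<^sub>v z) $ i" .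
    have "(\<Sum>j<m. M $$ (i,j) * (q ^ k * z $ j)) = q ^ k * (M *\<^sub>v z) $ i"
      using mv_sum[OF M z i] by (simp add: sum_distrib_left algebra_simps)
    moreover have "q ^ k * (q * z $ i) \<le> q ^ k * (M *\<^sub>v z) $ i"
      using sub i q by (intro mult_left_mono) auto
    ultimately have "q ^ k * (q * z $ i) \<le> (M ^\<^sub>m Suc k *\<^sub>v z) $ i" using 1 by linarith
    moreover have "q ^ Suc k * z $ i = q ^ k * (q * z $ i)" by (simp add: ac_simps)
    ultimately show "q ^ Suc k * z $ i \<le> (M ^\<^sub>m Suc k *\<^sub>v z) $ i" by linarith
  qed
qed

lemma growth:
  fixes N :: "real mat"
  assumes N: "N \<in> carrier_mat m m" and z: "z \<in> carrier_vec m"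
    and Nn: "\<forall>i<m. \<forall>j<m. 0 \<le> N $$ (i,j)" and zn: "\<forall>i<m. 0 \<le> z $ i"
    and i0: "i0 < m" and zpos: "0 < z $ i0"
    and sub: "\<forall>i<m. q * z $ i \<le> (N *\<^sub>v z) $ i" and q: "1 < q"
  shows "1 \<le> rho_real N"
proof (rule ccontr)
  assume "\<not> 1 \<le> rho_real N"
  hence lt: "spectral_radius (map_mat complex_of_real N) < 1" unfolding rho_real_def by simp
  have C: "map_mat complex_of_real N \<in> carrier_mat m m" using N by simp
  obtain c where c: "\<And>k. norm_bound ((map_mat complex_of_real N) ^\<^sub>m k) c"
    using spectral_radius_jnf_norm_bound_less_1_upper_triangular[OF C lt] by auto
  have bnd: "\<bar>(N ^\<^sub>m k) $$ (i,j)\<bar> \<le> c" if "i < m" "j < m" for i j k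
  proof -
    have "norm (((map_mat complex_of_real N) ^\<^sub>m k) $$ (i,j)) \<le> c"
      using c[of k] that N unfolding norm_bound_def by simp
    thus ?thesis using that N by (simp add: map_pow[OF N, symmetric])
  qed
  define S where "S = (\<Sum>j<m. z $ j)"
  obtain k where k: "c * S / z $ i0 < q ^ k" using real_arch_pow[OF q] by blast
  have "q ^ k * z $ i0 \<le> (N ^\<^sub>m k *\<^sub>v z) $ i0"
    using pow_lower[OF N z Nn zn sub] q i0 by auto
  also have "\<dots> = (\<Sum>j<m. (N ^\<^sub>m k) $$ (i0,j) * z $ j)"
    using mv_sum[OF pow_carrier_mat[OF N] z i0] .
  also have "\<dots> \<le> (\<Sum>j<m. c * z $ j)"
  proof (intro sum_mono)
    fix j assume "j \<in> {..<m}"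
    hence j: "j < m" by simp
    have "(N ^\<^sub>m k) $$ (i0,j) * z $ j \<le> \<bar>(N ^\<^sub>m k) $$ (i0,j)\<bar> * z $ j"
      using zn j by (intro mult_right_mono) auto
    also have "\<dots> \<le> c * z $ j" using bnd[OF i0 j] zn j by (intro mult_right_mono) auto
    finally show "(N ^\<^sub>m k) $$ (i0,j) * z $ j \<le> c * z $ j" .
  qed
  also have "\<dots> = c * S" unfolding S_def by (simp add: sum_distrib_left)
  finally have "q ^ k * z $ i0 \<le> c * S" .
  moreover have "c * S < q ^ k * z $ i0" using k zpos by (simp add: divide_less_eq)
  ultimately show False by simp
qed

lemma rho_nonneg:
  assumes M: "(M::real mat) \<in> carrier_mat m m" and m: "0 < m"
  shows "0 \<le> rho_real M"
proof -
  have C: "map_mat complex_of_real M \<in> carrier_mat m m" using M by simp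
  from spectral_radius_mem_max(1)[OF C m] show ?thesis unfolding rho_real_def by auto
qed

lemma scaling:
  assumes M: "(M::real mat) \<in> carrier_mat m m" and m: "0 < m" and t: "0 < t"
  shows "rho_real ((1/t) \<cdot>\<^sub>m M) * t \<le> rho_real M"
proof -
  let ?C = "map_mat complex_of_real M"
  let ?B = "map_mat complex_of_real ((1/t) \<cdot>\<^sub>m M)"
  have C: "?C \<in> carrier_mat m m" and B: "?B \<in> carrier_mat m m" using M by auto
  from spectral_radius_mem_max(1)[OF B m] obtain mu where
    mu: "mu \<in> spectrum ?B" "spectral_radius ?B = norm mu" by auto
  from mu(1) obtain v where ev: "eigenvector ?B v mu"
    unfolding spectrum_def eigenvalue_def by auto
  hence v: "v \<in> carrier_vec m" "v \<noteq> 0\<^sub>v m" "?B *\<^sub>v v = mu \<cdot>\<^sub>v v"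
    using B unfolding eigenvector_def by auto
  have "?C *\<^sub>v v = (complex_of_real t * mu) \<cdot>\<^sub>v v"
  proof (rule eq_vecI)
    fix i assume "i < dim_vec ((complex_of_real t * mu) \<cdot>\<^sub>v v)"
    hence i: "i < m" using v by simp
    have "mu * v $ i = (?B *\<^sub>v v) $ i" using v i by simp
    also have "\<dots> = (\<Sum>j<m. ?B $$ (i,j) * v $ j)" using mv_sum[OF B v(1) i] .
    also have "\<dots> = complex_of_real (1/t) * (\<Sum>j<m. ?C $$ (i,j) * v $ j)"
      using M i by (auto simp: sum_distrib_left intro!: sum.cong)
    also have "(\<Sum>j<m. ?C $$ (i,j) * v $ j) = (?C *\<^sub>v v) $ i"
      using mv_sum[OF C v(1) i] by simp
    finally have "mu * v $ i = complex_of_real (1/t) * (?C *\<^sub>v v) $ i" .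
    hence "complex_of_real t * (mu * v $ i) = (?C *\<^sub>v v) $ i" using t
      by (simp add: of_real_divide)
    thus "(?C *\<^sub>v v) $ i = ((complex_of_real t * mu) \<cdot>\<^sub>v v) $ i" using i v by (simp add: mult.assoc)
  qed (use v C in auto)
  hence "eigenvector ?C v (complex_of_real t * mu)" using v C unfolding eigenvector_def by auto
  hence "complex_of_real t * mu \<in> spectrum ?C" unfolding spectrum_def eigenvalue_def by auto
  hence "norm (complex_of_real t * mu) \<le> spectral_radius ?C"
    using spectral_radius_mem_max(2)[OF C m] by auto
  thus ?thesis using mu(2) t unfolding rho_real_def by (simp add: norm_mult mult.commute)
qed

lemma subinv:
  fixes M :: "real mat"
  assumes M: "M \<in> carrier_mat m m" and z: "z \<in> carrier_vec m"
    and Mn: "\<forall>i<m. \<forall>j<m. 0 \<le> M $$ (i,j)" and zn: "\<forall>i<m. 0 \<le> z $ i"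
    and i0: "i0 < m" and zpos: "0 < z $ i0"
    and sub: "\<forall>i<m. r * z $ i \<le> (M *\<^sub>v z) $ i"
  shows "r \<le> rho_real M"
proof (rule ccontr)
  assume "\<not> r \<le> rho_real M"
  hence lt: "rho_real M < r" by simp
  have m: "0 < m" using i0 by simp
  have r0: "0 \<le> rho_real M" using rho_nonneg[OF M m] .
  define t where "t = (rho_real M + r) / 2"
  have t: "0 < t" "t < r" "rho_real M < t" using lt r0 unfolding t_def by auto
  define N where "N = (1/t) \<cdot>\<^sub>m M"
  have N: "N \<in> carrier_mat m m" using M unfolding N_def by simp
  have Nn: "\<forall>i<m. \<forall>j<m. 0 \<le> N $$ (i,j)" using Mn M t unfolding N_def by auto
  have Nsub: "\<forall>i<m. (r/t) * z $ i \<le> (N *\<^sub>v z) $ i"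
  proof (intro allI impI)
    fix i assume i: "i < m"
    have "(N *\<^sub>v z) $ i = (1/t) * (M *\<^sub>v z) $ i"
      using mv_sum[OF N z i] mv_sum[OF M z i] M i unfolding N_def
      by (auto simp: sum_distrib_left intro!: sum.cong)
    moreover have "(1/t) * (r * z $ i) \<le> (1/t) * (M *\<^sub>v z) $ i"
      using sub i t by (intro mult_left_mono) auto
    ultimately show "(r/t) * z $ i \<le> (N *\<^sub>v z) $ i" by simp
  qed
  have q: "1 < r / t" using t by simp
  have "1 \<le> rho_real N" using growth[OF N z Nn zn i0 zpos Nsub q] .
  moreover have "rho_real N * t \<le> rho_real M" using scaling[OF M m t(1)] unfolding N_def .
  ultimately have "t \<le> rho_real M" using t
    by (meson le_less_trans less_eq_real_def mult_le_cancel_right1 not_le)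
  thus False using t by simp
qed

lemma lower:
  fixes A :: "real mat"
  assumes A: "A \<in> carrier_mat n n" and n: "0 < n"
    and An: "\<forall>i<n. \<forall>j<n. 0 \<le> A $$ (i,j)"
  shows "\<exists>w i0. w \<in> carrier_vec n \<and> (\<forall>i<n. 0 \<le> w $ i) \<and> i0 < n \<and> 0 < w $ i0 \<and>
     (\<forall>i<n. rho_real A * w $ i \<le> (A *\<^sub>v w) $ i)"
proof -
  let ?C = "map_mat complex_of_real A"
  have C: "?C \<in> carrier_mat n n" using A by simp
  from spectral_radius_mem_max(1)[OF C n] obtain lam where
    lam: "lam \<in> spectrum ?C" "spectral_radius ?C = norm lam" by auto
  from lam(1) obtain v where ev: "eigenvector ?C v lam"
    unfolding spectrum_def eigenvalue_def by auto
  hence v: "v \<in> carrier_vec n" "v \<noteq> 0\<^sub>v n" "?C *\<^sub>v v = lam \<cdot>\<^sub>v v"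
    using C unfolding eigenvector_def by auto
  define w where "w = vec n (\<lambda>i. norm (v $ i))"
  have w: "w \<in> carrier_vec n" unfolding w_def by simp
  obtain i0 where i0: "i0 < n" "v $ i0 \<noteq> 0"
  proof (rule ccontr)
    assume "\<not> thesis"
    hence "\<forall>i<n. v $ i = 0" using that by blast
    hence "v = 0\<^sub>v n" using v(1) by (intro eq_vecI) auto
    thus False using v(2) by simp
  qed
  have "\<forall>i<n. rho_real A * w $ i \<le> (A *\<^sub>v w) $ i"
  proof (intro allI impI)
    fix i assume i: "i < n"
    have "rho_real A * w $ i = norm (lam * v $ i)"
      unfolding rho_real_def lam(2) w_def using i by (simp add: norm_mult)
    also have "lam * v $ i = (?C *\<^sub>v v) $ i" using v i by simp
    also have "\<dots> = (\<Sum>j<n. ?C $$ (i,j) * v $ j)" using mv_sum[OF C v(1) i] .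
    also have "norm \<dots> \<le> (\<Sum>j<n. norm (?C $$ (i,j) * v $ j))" by (rule norm_sum)
    also have "\<dots> = (\<Sum>j<n. A $$ (i,j) * w $ j)"
      using A An i unfolding w_def by (intro sum.cong) (auto simp: norm_mult)
    also have "\<dots> = (A *\<^sub>v w) $ i" using mv_sum[OF A w i] by simp
    finally show "rho_real A * w $ i \<le> (A *\<^sub>v w) $ i" .
  qed
  moreover have "\<forall>i<n. 0 \<le> w $ i" unfolding w_def by simp
  moreover have "0 < w $ i0" unfolding w_def using i0 by simp
  ultimately show ?thesis using w i0 by blast
qed

theorem proposition2:
  fixes n :: nat and Lam W1 W2 :: "real mat"
  assumes Lam: "Lam \<in> carrier_mat n n"
    and W1: "W1 \<in> carrier_mat n n"
    and W2: "W2 \<in> carrier_mat n n"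
    and Lam_diag: "diagonal_mat Lam"
    and Lam_range: "\<forall>i<n. 0 \<le> Lam $$ (i, i) \<and> Lam $$ (i, i) \<le> 1"
    and W1_nonneg: "\<forall>i<n. \<forall>j<n. 0 \<le> W1 $$ (i, j)"
    and W2_nonneg: "\<forall>i<n. \<forall>j<n. 0 \<le> W2 $$ (i, j)"
    and row_stoch: "\<forall>i<n. (\<Sum>j<n. (W1 + W2) $$ (i, j)) = 1"
  shows "rho_real (FJMM_mat n Lam W1 W2) \<ge> rho_real (FJ_mat Lam W1 W2)"
proof (cases "n = 0")
  case True
  have "FJMM_mat n Lam W1 W2 = FJ_mat Lam W1 W2"
    using True Lam W1 W2 unfolding FJMM_mat_def FJ_mat_def by (intro eq_matI) auto
  thus ?thesis by simp
next
  case False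
  hence n: "0 < n" by simp
  define A where "A = FJ_mat Lam W1 W2"
  have W: "W1 + W2 \<in> carrier_mat n n" using W1 W2 by simp
  have A: "A \<in> carrier_mat n n" unfolding A_def FJ_mat_def using Lam W by simp
  have Aent: "A $$ (i,j) = Lam $$ (i,i) * (W1 $$ (i,j) + W2 $$ (i,j))" if "i < n" "j < n" for i j
    using diag_mult_entry[OF Lam W Lam_diag that] that W1 W2 unfolding A_def FJ_mat_def by simp
  have An: "\<forall>i<n. \<forall>j<n. 0 \<le> A $$ (i,j)"
    using Aent Lam_range W1_nonneg W2_nonneg by (simp add: add_nonneg_nonneg)
  obtain w i0 where w: "w \<in> carrier_vec n" and wn: "\<forall>i<n. 0 \<le> w $ i" and i0: "i0 < n"
    and wpos: "0 < w $ i0" and wsub: "\<forall>i<n. rho_real A * w $ i \<le> (A *\<^sub>v w) $ i"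
    using lower[OF A n An] by blast
  define r where "r = rho_real A"
  have r0: "0 \<le> r" unfolding r_def using rho_nonneg[OF A n] .
  obtain im where im: "im < n" "\<forall>j<n. w $ j \<le> w $ im"
  proof -
    have fin: "finite ((\<lambda>j. w $ j) ` {..<n})" by simp
    have ne: "(\<lambda>j. w $ j) ` {..<n} \<noteq> {}" using n by auto
    from Max_in[OF fin ne] obtain im where "im < n" "w $ im = Max ((\<lambda>j. w $ j) ` {..<n})" by auto
    moreover have "\<forall>j<n. w $ j \<le> Max ((\<lambda>j. w $ j) ` {..<n})" using fin by auto
    ultimately show ?thesis using that by auto
  qed
  have r1: "r \<le> 1"
  proof -
    have wim: "0 < w $ im" using im(2) i0 wpos by (meson less_le_trans)
    have "r * w $ im \<le> (A *\<^sub>v w) $ im" using wsub im(1) unfolding r_def by auto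
    also have "\<dots> = (\<Sum>j<n. A $$ (im,j) * w $ j)" using mv_sum[OF A w im(1)] .
    also have "\<dots> \<le> (\<Sum>j<n. A $$ (im,j) * w $ im)"
      using An im by (intro sum_mono mult_left_mono) auto
    also have "\<dots> = (\<Sum>j<n. (Lam $$ (im,im) * w $ im) * (W1 + W2) $$ (im,j))"
      using Aent im(1) W1 W2 by (intro sum.cong) (auto simp: mult_ac)
    also have "\<dots> = (Lam $$ (im,im) * w $ im) * (\<Sum>j<n. (W1 + W2) $$ (im,j))"
      by (rule sum_distrib_left[symmetric])
    also have "\<dots> = Lam $$ (im,im) * w $ im" using row_stoch im(1) by simp
    also have "\<dots> \<le> 1 * w $ im" using Lam_range im(1) wim by (intro mult_right_mono) auto
    finally have "r * w $ im \<le> 1 * w $ im" .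
    thus ?thesis using wim by (simp add: mult_le_cancel_right)
  qed
  define D where "D = FJMM_mat n Lam W1 W2"
  have L1: "Lam * W1 \<in> carrier_mat n n" and L2: "Lam * W2 \<in> carrier_mat n n"
    using Lam W1 W2 by auto
  have D: "D \<in> carrier_mat (n+n) (n+n)" unfolding D_def FJMM_mat_def using L1 L2 by auto
  have L1ent: "(Lam * W1) $$ (i,j) = Lam $$ (i,i) * W1 $$ (i,j)" if "i < n" "j < n" for i j
    using diag_mult_entry[OF Lam W1 Lam_diag that] .
  have L2ent: "(Lam * W2) $$ (i,j) = Lam $$ (i,i) * W2 $$ (i,j)" if "i < n" "j < n" for i j
    using diag_mult_entry[OF Lam W2 Lam_diag that] .
  have L1n: "\<forall>i<n. \<forall>j<n. 0 \<le> (Lam * W1) $$ (i,j)"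
    using L1ent Lam_range W1_nonneg by simp
  have L2n: "\<forall>i<n. \<forall>j<n. 0 \<le> (Lam * W2) $$ (i,j)"
    using L2ent Lam_range W2_nonneg by simp
  have Dn: "\<forall>i<n+n. \<forall>j<n+n. 0 \<le> D $$ (i,j)"
  proof (intro allI impI)
    fix i j assume ij: "i < n + n" "j < n + n"
    have dims: "dim_row (Lam * W1) = n" "dim_col (Lam * W1) = n" using L1 by auto
    show "0 \<le> D $$ (i,j)" using ij L1n L2n dims by (auto simp: D_def FJMM_mat_def)
  qed
  define z where "z = w @\<^sub>v (r \<cdot>\<^sub>v w)"
  have z: "z \<in> carrier_vec (n+n)" unfolding z_def using w by auto
  have zent: "z $ i = (if i < n then w $ i else r * w $ (i - n))" if "i < n + n" for i
    unfolding z_def using w that by auto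
  have zn: "\<forall>i<n+n. 0 \<le> z $ i" using zent wn r0 by simp
  have zpos: "0 < z $ i0" using zent i0 wpos by simp
  have Dz: "D *\<^sub>v z = (0\<^sub>m n n *\<^sub>v w + 1\<^sub>m n *\<^sub>v (r \<cdot>\<^sub>v w)) @\<^sub>v
      ((Lam * W2) *\<^sub>v w + (Lam * W1) *\<^sub>v (r \<cdot>\<^sub>v w))"
    unfolding D_def FJMM_mat_def z_def
    by (rule four_block_mat_mult_vec) (use L1 L2 w in auto)
  have AW: "(A *\<^sub>v w) $ k = ((Lam * W1) *\<^sub>v w) $ k + ((Lam * W2) *\<^sub>v w) $ k" if k: "k < n" for k
  proof -
    have "(A *\<^sub>v w) $ k = (\<Sum>j<n. A $$ (k,j) * w $ j)" using mv_sum[OF A w k] .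
    also have "\<dots> = (\<Sum>j<n. (Lam * W1) $$ (k,j) * w $ j + (Lam * W2) $$ (k,j) * w $ j)"
      using Aent L1ent L2ent k by (intro sum.cong) (auto simp: algebra_simps)
    also have "\<dots> = ((Lam * W1) *\<^sub>v w) $ k + ((Lam * W2) *\<^sub>v w) $ k"
      using mv_sum[OF L1 w k] mv_sum[OF L2 w k] by (simp add: sum.distrib)
    finally show ?thesis .
  qed
  have Dsub: "\<forall>i<n+n. r * z $ i \<le> (D *\<^sub>v z) $ i"
  proof (intro allI impI)
    fix i assume i: "i < n + n"
    show "r * z $ i \<le> (D *\<^sub>v z) $ i"
    proof (cases "i < n")
      case True
      have "(D *\<^sub>v z) $ i = r * w $ i" unfolding Dz using True w by simp
      thus ?thesis using zent[OF i] True by simp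
    next
      case False
      define k where "k = i - n"
      have k: "k < n" using i False unfolding k_def by simp
      let ?a = "((Lam * W1) *\<^sub>v w) $ k" and ?b = "((Lam * W2) *\<^sub>v w) $ k"
      have "(D *\<^sub>v z) $ i = ?b + r * ?a"
        unfolding Dz using False i w L1 L2 k carrier_matD[OF Lam] carrier_matD[OF W1] carrier_matD[OF W2]
        unfolding k_def by (simp add: mult_mat_vec)
      moreover have "z $ i = r * w $ k" using zent[OF i] False unfolding k_def by simp
      moreover have b0: "0 \<le> ?b" using mv_nonneg[OF L2 w k L2n wn] .
      moreover have "r * w $ k \<le> ?a + ?b" using wsub[rule_format, OF k] AW[OF k] unfolding r_def by linarith
      ultimately show ?thesis
      proof -
        assume e1: "(D *\<^sub>v z) $ i = ?b + r * ?a" and e2: "z $ i = r * w $ k"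
          and b0: "0 \<le> ?b" and s: "r * w $ k \<le> ?a + ?b"
        have "r * (r * w $ k) \<le> r * (?a + ?b)" using s r0 by (rule mult_left_mono)
        moreover have "r * ?b \<le> ?b" using mult_right_mono[OF r1 b0] by simp
        ultimately show ?thesis using e1 e2 by (simp add: algebra_simps)
      qed
    qed
  qed
  have "r \<le> rho_real D"
    using subinv[OF D z Dn zn _ zpos Dsub] i0 by simp
  thus ?thesis unfolding r_def A_def D_def .
qed

end
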